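(* (Sample size two.) Fix $d\ge2$, a $d\times d$ stochastic matrix $P$, $\bm x$ in the simplex and $t\ge0$. As $\theta\to0$, for $a\in[d]$, \[ p(2\bm e_a;t,\bm x)=x_a^2(1-\theta t)e^{-t}+\theta te^{-t}x_a\sum_{j\in[d]}x_jP_{ja}+\big(\bm xe^{t\gamma}\big)_a(1-e^{-t})+\theta\Big\{\big(\bm xe^{t\gamma}\big)_a(P_{aa}-1)-\tfrac12\big(\bm xe^{t\gamma}(P-I)\big)_a\Big\}\big(1-(1+t)e^{-t}\big)+o(\theta), \] and for $a\ne b$, \[ p(\bm e_a+\bm e_b;t,\bm x)=2x_ax_b(1-\theta t)e^{-t}+\theta te^{-t}\sum_{j\in[d]}\big(x_ax_jP_{jb}+x_bx_jP_{ja}\big)+\theta\Big\{\big(\bm xe^{t\gamma}\big)_aP_{ab}+\big(\bm xe^{t\gamma}\big)_bP_{ba}\Big\}\big(1-(1+t)e^{-t}\big)+o(\theta). \]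
   Context: Wright–Fisher diffusion: $\theta>0$, $P$ a $d\times d$ stochastic matrix, $\gamma=\frac{\theta}{2}(P-I)$; $\{\bm X(t)\}_{t\ge0}$ is the diffusion on the simplex with generator $\mathcal L=\frac12\sum_{i,j=1}^d x_i(\delta_{ij}-x_j)\frac{\partial^2}{\partial x_i\partial x_j}+\sum_{i,j=1}^d\gamma_{ji}x_j\frac{\partial}{\partial x_i}$. For $\bm n\in\mathbb Z^d_{\ge0}$ with $|\bm n|=n$, $m(\bm n;n,\bm p)=\binom{n}{\bm n}\prod_j p_j^{n_j}$ and $p(\bm n;t,\bm x)=\mathbb E[m(\bm n;n,\bm X(t))\mid\bm X(0)=\bm x]$; $\bm e_a$ is the $a$-th unit vector and $\bm xe^{t\gamma}$ is a row vector times a matrix exponential. *)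

theory Defs
  imports "HOL-Analysis.Analysis" "HOL-Probability.Probability" "HOL-Library.Landau_Symbols"
begin

definition mpow :: "real^'d^'d \<Rightarrow> nat \<Rightarrow> real^'d^'d" where
  "mpow A k = ((\<lambda>B. A ** B) ^^ k) (mat 1)"

definition mexp :: "real^'d^'d \<Rightarrow> real^'d^'d" where
  "mexp A = (\<Sum>k. (1 / fact k) *\<^sub>R mpow A k)"

definition stochastic :: "real^'d^'d \<Rightarrow> bool" where
  "stochastic P \<longleftrightarrow> (\<forall>i j. 0 \<le> P$i$j) \<and> (\<forall>i. (\<Sum>j\<in>UNIV. P$i$j) = 1)"

definition prob_simplex :: "(real^'d) set" where
  "prob_simplex = {x. (\<forall>i. 0 \<le> x$i) \<and> (\<Sum>i\<in>UNIV. x$i) = 1}"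

definition gammaM :: "real \<Rightarrow> real^'d^'d \<Rightarrow> real^'d^'d" where
  "gammaM \<theta> P = (\<theta> / 2) *\<^sub>R (P - mat 1)"

definition pd :: "'d::finite \<Rightarrow> (real^'d \<Rightarrow> real) \<Rightarrow> real^'d \<Rightarrow> real" where
  "pd i f x = deriv (\<lambda>s. f (x + s *\<^sub>R axis i 1)) 0"

definition WFgen :: "real \<Rightarrow> real^'d^'d \<Rightarrow> (real^'d \<Rightarrow> real) \<Rightarrow> real^'d \<Rightarrow> real" where
  "WFgen \<theta> P f x =
     (1/2) * (\<Sum>i\<in>UNIV. \<Sum>j\<in>UNIV. x$i * ((if i = j then 1 else 0) - x$j) * pd i (pd j f) x)
     + (\<Sum>i\<in>UNIV. \<Sum>j\<in>UNIV. (gammaM \<theta> P)$j$i * x$j * pd i f x)"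

definition polyfun :: "(real^'d \<Rightarrow> real) \<Rightarrow> bool" where
  "polyfun f \<longleftrightarrow> (\<exists>S c. finite S \<and>
      f = (\<lambda>x. \<Sum>k\<in>S. c k * (\<Prod>j\<in>UNIV. x$j ^ k j)))"

text \<open>A Wright--Fisher diffusion started at x, given through the martingale problem
  in expectation form (Dynkin's formula) for all polynomial test functions.\<close>
definition WF_process :: "real \<Rightarrow> real^'d^'d \<Rightarrow> real^'d \<Rightarrow> 'w measure
      \<Rightarrow> (real \<Rightarrow> 'w \<Rightarrow> real^'d) \<Rightarrow> bool" where
  "WF_process \<theta> P x M X \<longleftrightarrow>
     prob_space M \<and>
     (\<forall>t\<ge>0. X t \<in> borel_measurable M) \<and>
     (\<forall>t\<ge>0. AE \<omega> in M. X t \<omega> \<in> prob_simplex) \<and>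
     (AE \<omega> in M. X 0 \<omega> = x) \<and>
     (\<forall>f. polyfun f \<longrightarrow> (\<forall>t\<ge>0.
        ((\<lambda>s. \<integral>\<omega>. WFgen \<theta> P f (X s \<omega>) \<partial>M) has_integral
           ((\<integral>\<omega>. f (X t \<omega>) \<partial>M) - f x)) {0..t}))"

definition mult :: "('d::finite \<Rightarrow> nat) \<Rightarrow> real^'d \<Rightarrow> real" where
  "mult n p = fact (\<Sum>j\<in>UNIV. n j) / (\<Prod>j\<in>UNIV. fact (n j)) * (\<Prod>j\<in>UNIV. p$j ^ n j)"

definition unitv :: "'d \<Rightarrow> 'd \<Rightarrow> nat" where
  "unitv a = (\<lambda>j. if j = a then 1 else 0)"

end

theory Submission
  imports Defs
begin

lemma int_cont:
  fixes m g :: "real \<Rightarrow> real"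
  assumes T: "T \<ge> 0" and h: "\<And>s. 0 \<le> s \<Longrightarrow> s \<le> T \<Longrightarrow> (g has_integral (m s - m0)) {0..s}"
  shows "continuous_on {0..T} m"
proof -
  have gi: "g integrable_on {0..T}" using h[of T] T by blast
  have e: "m0 + integral {0..s} g = m s" if "s \<in> {0..T}" for s
  proof -
    have "integral {0..s} g = m s - m0" by (rule integral_unique, rule h) (use that in auto)
    then show ?thesis by simp
  qed
  have c: "continuous_on {0..T} (\<lambda>s. m0 + integral {0..s} g)"
    by (rule continuous_on_add[OF continuous_on_const indefinite_integral_continuous_1[OF gi]])
  show ?thesis by (rule continuous_on_eq[OF c]) (use e in auto)
qed

lemma int_deriv:
  fixes m g :: "real \<Rightarrow> real"
  assumes T: "T \<ge> 0" and h: "\<And>s. 0 \<le> s \<Longrightarrow> s \<le> T \<Longrightarrow> (g has_integral (m s - m0)) {0..s}"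
    and gc: "continuous_on {0..T} g" and s: "s \<in> {0..T}"
  shows "(m has_real_derivative g s) (at s within {0..T})"
proof -
  have e: "m0 + integral {0..s} g = m s" if "s \<in> {0..T}" for s
  proof -
    have "integral {0..s} g = m s - m0" by (rule integral_unique, rule h) (use that in auto)
    then show ?thesis by simp
  qed
  have d: "((\<lambda>u. integral {0..u} g) has_real_derivative g s) (at s within {0..T})"
    using integral_has_vector_derivative[OF gc s] by (simp add: has_real_derivative_iff_has_vector_derivative)
  have "((\<lambda>u. m0 + integral {0..u} g) has_real_derivative g s) (at s within {0..T})"
    using DERIV_add[OF DERIV_const[of m0] d] by simp
  then show ?thesis
    by (rule has_field_derivative_transform_within[where d=1]) (use s e in auto)
qed

lemma mvt_bound:
  fixes f f' :: "real \<Rightarrow> real"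
  assumes d: "\<And>z. z \<in> {0..T} \<Longrightarrow> (f has_real_derivative f' z) (at z within {0..T})"
    and B: "\<And>z. z \<in> {0..T} \<Longrightarrow> \<bar>f' z\<bar> \<le> B" and s: "s \<in> {0..T}"
  shows "\<bar>f s - f 0\<bar> \<le> B * s"
proof -
  have "norm (f s - f 0) \<le> B * norm (s - 0)"
    by (rule field_differentiable_bound[of "{0..T}" f f']) (use d B s in auto)
  then show ?thesis using s by auto
qed

lemma decay_bound:
  fixes e r :: "real \<Rightarrow> real"
  assumes d: "\<And>z. z \<in> {0..T} \<Longrightarrow> (e has_real_derivative (r z - e z)) (at z within {0..T})"
    and B: "\<And>z. z \<in> {0..T} \<Longrightarrow> \<bar>r z\<bar> \<le> B" and e0: "e 0 = 0" and s: "s \<in> {0..T}"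
  shows "\<bar>e s\<bar> \<le> B * s"
proof -
  have sub: "{0..s} \<subseteq> {0..T}" using s by auto
  have d2: "((\<lambda>z. exp z * e z) has_real_derivative exp z * r z) (at z within {0..s})" if "z \<in> {0..s}" for z
  proof -
    have zT: "z \<in> {0..T}" using that sub by blast
    have "(e has_real_derivative (r z - e z)) (at z within {0..s})"
      by (rule DERIV_subset[OF d[OF zT] sub])
    then have "((\<lambda>z. exp z * e z) has_real_derivative exp z * e z + exp z * (r z - e z)) (at z within {0..s})"
      by (auto intro!: derivative_eq_intros)
    then show ?thesis by (simp add: algebra_simps)
  qed
  have b2: "\<bar>exp z * r z\<bar> \<le> exp s * B" if "z \<in> {0..s}" for z
  proof -
    have zT: "z \<in> {0..T}" using that sub by blast
    have "\<bar>exp z * r z\<bar> = exp z * \<bar>r z\<bar>" by (simp add: abs_mult)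
    also have "\<dots> \<le> exp s * \<bar>r z\<bar>" using that by (intro mult_right_mono) auto
    also have "\<dots> \<le> exp s * B" by (rule mult_left_mono[OF B[OF zT]]) simp
    finally show ?thesis .
  qed
  have s2: "s \<in> {0..s}" using s by auto
  have "\<bar>exp s * e s - exp 0 * e 0\<bar> \<le> (exp s * B) * s"
    by (rule mvt_bound[of s "\<lambda>z. exp z * e z" "\<lambda>z. exp z * r z", OF d2 b2 s2])
  then have "exp s * \<bar>e s\<bar> \<le> exp s * (B * s)" using e0 by (simp add: abs_mult)
  then show ?thesis by simp
qed
lemma pd_aff: "pd i (\<lambda>x. u * x$a + v * x$b + w) y = u * (if i = a then 1 else 0) + v * (if i = b then 1 else 0)"
proof -
  have "((\<lambda>s. u * (y + s *\<^sub>R axis i 1)$a + v * (y + s *\<^sub>R axis i 1)$b + w) has_real_derivative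
      (u * (if i = a then 1 else 0) + v * (if i = b then 1 else 0))) (at 0)"
    by (auto simp: axis_def intro!: derivative_eq_intros)
  then show ?thesis unfolding pd_def by (rule DERIV_imp_deriv)
qed

lemma pd_lin: "pd i (\<lambda>x. x$a) y = (if i = a then 1 else 0)"
  using pd_aff[of i 1 a 0 a 0 y] by simp

lemma pd_const: "pd i (\<lambda>x. w) y = 0"
  using pd_aff[of i 0 a 0 a w y] by simp

lemma pd_quad: "pd i (\<lambda>x. x$a * x$b) y = (if i = a then 1 else 0) * y$b + (if i = b then 1 else 0) * y$a"
proof -
  have "((\<lambda>s. (y + s *\<^sub>R axis i 1)$a * (y + s *\<^sub>R axis i 1)$b) has_real_derivative
      ((if i = a then 1 else 0) * y$b + (if i = b then 1 else 0) * y$a)) (at 0)"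
    by (auto simp: axis_def intro!: derivative_eq_intros)
  then show ?thesis unfolding pd_def by (rule DERIV_imp_deriv)
qed

lemma sdr: "(\<Sum>j\<in>(UNIV::'d::finite set). g j * (if j = b then 1 else 0)) = (g b::real)"
proof -
  have "(\<Sum>j\<in>(UNIV::'d set). g j * (if j = b then 1 else 0)) = (\<Sum>j\<in>UNIV. if j = b then g j else 0)"
    by (rule sum.cong) auto
  then show ?thesis by simp
qed
lemma sif: "(\<Sum>j\<in>A. if P then f j else 0) = (if P then sum f A else 0)"
  by simp

lemma pd_pd_quad: "pd j (pd i (\<lambda>x. x$a * x$b)) y =
    (if i = a then 1 else 0) * (if j = b then 1 else 0) + (if i = b then 1 else 0) * (if j = a then 1 else 0)"
proof -
  have "pd i (\<lambda>x. x$a * x$b) = (\<lambda>x. (if i = a then 1 else 0) * x$b + (if i = b then 1 else 0) * x$a + 0)"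
    by (rule ext) (simp add: pd_quad)
  then show ?thesis by (simp only: pd_aff)
qed

lemma WFgen_lin: "WFgen \<theta> P (\<lambda>x. x$a) y = (\<Sum>j\<in>UNIV. gammaM \<theta> P $ j $ a * y$j)"
proof -
  have "pd i (\<lambda>x. x$a) = (\<lambda>x. (if i = a then 1 else 0))" for i by (rule ext) (simp add: pd_lin)
  then show ?thesis unfolding WFgen_def by (simp add: pd_const if_distrib sif cong: if_cong)
qed

lemma WFgen_quad: "WFgen \<theta> P (\<lambda>x. x$a * x$b) y =
   (if a = b then y$a else 0) - y$a * y$b + (\<Sum>j\<in>UNIV. gammaM \<theta> P $ j $ a * y$j) * y$b
      + (\<Sum>j\<in>UNIV. gammaM \<theta> P $ j $ b * y$j) * y$a"
proof -
  define A where "A i j = y$i * ((if i = j then 1 else 0) - y$j)" for i j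
  have 1: "(\<Sum>i\<in>UNIV. \<Sum>j\<in>UNIV. y$i * ((if i = j then 1 else 0) - y$j) * pd i (pd j (\<lambda>x. x$a * x$b)) y)
     = A b a + A a b"
  proof -
    have "(\<Sum>j\<in>UNIV. y$i * ((if i = j then 1 else 0) - y$j) * pd i (pd j (\<lambda>x. x$a * x$b)) y)
        = A i a * (if i = b then 1 else 0) + A i b * (if i = a then 1 else 0)" for i
    proof -
      have "(\<Sum>j\<in>UNIV. y$i * ((if i = j then 1 else 0) - y$j) * pd i (pd j (\<lambda>x. x$a * x$b)) y)
         = (\<Sum>j\<in>UNIV. (A i j * (if i = b then 1 else 0)) * (if j = a then 1 else 0)
                 + (A i j * (if i = a then 1 else 0)) * (if j = b then 1 else 0))"
        unfolding pd_pd_quad A_def by (rule sum.cong) (auto simp: algebra_simps)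
      also have "\<dots> = A i a * (if i = b then 1 else 0) + A i b * (if i = a then 1 else 0)"
        by (simp only: sum.distrib sdr)
      finally show ?thesis .
    qed
    then show ?thesis by (simp only: sum.distrib sdr)
  qed
  have 2: "(\<Sum>i\<in>UNIV. \<Sum>j\<in>UNIV. gammaM \<theta> P $ j $ i * y $ j * pd i (\<lambda>x. x $ a * x $ b) y)
     = (\<Sum>j\<in>UNIV. gammaM \<theta> P $ j $ a * y$j) * y$b + (\<Sum>j\<in>UNIV. gammaM \<theta> P $ j $ b * y$j) * y$a"
  proof -
    have "(\<Sum>i\<in>UNIV. \<Sum>j\<in>UNIV. gammaM \<theta> P $ j $ i * y $ j * pd i (\<lambda>x. x $ a * x $ b) y)
      = (\<Sum>i\<in>UNIV. (\<Sum>j\<in>UNIV. gammaM \<theta> P $ j $ i * y $ j * y$b) * (if i = a then 1 else 0)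
          + (\<Sum>j\<in>UNIV. gammaM \<theta> P $ j $ i * y $ j * y$a) * (if i = b then 1 else 0))"
      unfolding pd_quad by (rule sum.cong) (auto simp: algebra_simps sum_distrib_right sum.distrib)
    also have "\<dots> = (\<Sum>j\<in>UNIV. gammaM \<theta> P $ j $ a * y $ j * y$b) + (\<Sum>j\<in>UNIV. gammaM \<theta> P $ j $ b * y $ j * y$a)"
      by (simp only: sum.distrib sdr)
    finally show ?thesis by (simp add: sum_distrib_right)
  qed
  show ?thesis unfolding WFgen_def 1 2 A_def by (auto simp: algebra_simps)
qed

lemma prod_delta_pow: "(\<Prod>j\<in>(UNIV::'d::finite set). (y::real^'d)$j ^ (if j = a then 1 else 0)) = y$a"
proof -
  have "(\<Prod>j\<in>(UNIV::'d set). y$j ^ (if j = a then 1 else 0)) = (\<Prod>j\<in>UNIV. if j = a then y$j else 1)"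
    by (rule prod.cong) auto
  then show ?thesis by simp
qed

lemma polyfun_lin: "polyfun (\<lambda>x::real^'d::finite. x$a)"
  unfolding polyfun_def
  by (rule exI[of _ "{\<lambda>j. if j = a then 1 else 0}"], rule exI[of _ "\<lambda>_. 1"]) (simp add: prod_delta_pow)

lemma polyfun_quad: "polyfun (\<lambda>x::real^'d::finite. x$a * x$b)"
  unfolding polyfun_def
  by (rule exI[of _ "{\<lambda>j. (if j = a then 1 else 0) + (if j = b then 1 else 0)}"], rule exI[of _ "\<lambda>_. 1"])
     (simp add: power_add prod.distrib prod_delta_pow)

lemma simplex_bd: "y \<in> prob_simplex \<Longrightarrow> 0 \<le> y$j \<and> y$j \<le> 1"
proof -
  assume y: "y \<in> prob_simplex"
  then have nn: "\<forall>i. 0 \<le> y$i" and s: "(\<Sum>i\<in>UNIV. y$i) = 1" by (auto simp: prob_simplex_def)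
  have "y$j \<le> (\<Sum>i\<in>UNIV. y$i)" by (rule member_le_sum) (use nn in auto)
  then show ?thesis using nn s by auto
qed

lemma WF_int:
  assumes WF: "WF_process \<theta> P x M X" and s: "s \<ge> 0"
  shows "integrable M (\<lambda>\<omega>. X s \<omega> $ a)" "integrable M (\<lambda>\<omega>. X s \<omega> $ a * X s \<omega> $ b)"
    "\<bar>\<integral>\<omega>. X s \<omega> $ a \<partial>M\<bar> \<le> 1" "\<bar>\<integral>\<omega>. X s \<omega> $ a * X s \<omega> $ b \<partial>M\<bar> \<le> 1"
proof -
  have ps: "prob_space M" and meas: "X s \<in> borel_measurable M" and ae: "AE \<omega> in M. X s \<omega> \<in> prob_simplex"
    using WF s unfolding WF_process_def by auto
  interpret prob_space M by fact
  have m1: "(\<lambda>\<omega>. X s \<omega> $ i) \<in> borel_measurable M" for i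
    by (rule measurable_compose[OF meas borel_measurable_nth])
  have ae2: "AE \<omega> in M. (\<forall>i. 0 \<le> X s \<omega> $ i \<and> X s \<omega> $ i \<le> 1)"
    using ae by eventually_elim (use simplex_bd in blast)
  show i1: "integrable M (\<lambda>\<omega>. X s \<omega> $ a)"
    by (rule integrable_const_bound[where B=1]) (use ae2 m1 in \<open>auto elim!: AE_mp\<close>)
  have mm: "(\<lambda>\<omega>. X s \<omega> $ a * X s \<omega> $ b) \<in> borel_measurable M"
    using m1[of a] m1[of b] by measurable
  have ae3: "AE \<omega> in M. \<bar>X s \<omega> $ a * X s \<omega> $ b\<bar> \<le> 1"
    using ae2 by eventually_elim (auto simp: abs_mult intro: mult_le_one)
  show i2: "integrable M (\<lambda>\<omega>. X s \<omega> $ a * X s \<omega> $ b)"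
    by (rule integrable_const_bound[where B=1]) (use ae3 mm in auto)
  have "0 \<le> (\<integral>\<omega>. X s \<omega> $ a \<partial>M)" "(\<integral>\<omega>. X s \<omega> $ a \<partial>M) \<le> 1"
    using ae2 by (auto intro!: integral_ge_const integral_le_const i1 elim!: AE_mp)
  then show "\<bar>\<integral>\<omega>. X s \<omega> $ a \<partial>M\<bar> \<le> 1" by auto
  have "-1 \<le> (\<integral>\<omega>. X s \<omega> $ a * X s \<omega> $ b \<partial>M)" "(\<integral>\<omega>. X s \<omega> $ a * X s \<omega> $ b \<partial>M) \<le> 1"
    using ae3 by (auto intro!: integral_ge_const integral_le_const i2 elim!: AE_mp)
  then show "\<bar>\<integral>\<omega>. X s \<omega> $ a * X s \<omega> $ b \<partial>M\<bar> \<le> 1" by auto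
qed

lemma WF_mom1:
  assumes WF: "WF_process \<theta> P x M X" and T: "T \<ge> 0"
  shows "((\<lambda>s. \<Sum>j\<in>UNIV. gammaM \<theta> P $ j $ a * (\<integral>\<omega>. X s \<omega> $ j \<partial>M))
          has_integral ((\<integral>\<omega>. X T \<omega> $ a \<partial>M) - x$a)) {0..T}"
proof -
  have "((\<lambda>s. \<integral>\<omega>. WFgen \<theta> P (\<lambda>y. y$a) (X s \<omega>) \<partial>M) has_integral
           ((\<integral>\<omega>. X T \<omega> $ a \<partial>M) - x$a)) {0..T}"
    using WF T polyfun_lin[of a] unfolding WF_process_def by blast
  then show ?thesis
  proof (rule has_integral_eq[rotated])
    fix s assume "s \<in> {0..T}"
    then have s: "s \<ge> 0" by auto
    show "(\<integral>\<omega>. WFgen \<theta> P (\<lambda>y. y$a) (X s \<omega>) \<partial>M) = (\<Sum>j\<in>UNIV. gammaM \<theta> P $ j $ a * (\<integral>\<omega>. X s \<omega> $ j \<partial>M))"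
      unfolding WFgen_lin
      by (simp add: integral_sum integrable_mult_right WF_int(1)[OF WF s])
  qed
qed

lemma WF_mom2:
  assumes WF: "WF_process \<theta> P x M X" and T: "T \<ge> 0"
  shows "((\<lambda>s. (if a = b then (\<integral>\<omega>. X s \<omega> $ a \<partial>M) else 0) - (\<integral>\<omega>. X s \<omega> $ a * X s \<omega> $ b \<partial>M)
            + (\<Sum>j\<in>UNIV. gammaM \<theta> P $ j $ a * (\<integral>\<omega>. X s \<omega> $ j * X s \<omega> $ b \<partial>M))
            + (\<Sum>j\<in>UNIV. gammaM \<theta> P $ j $ b * (\<integral>\<omega>. X s \<omega> $ j * X s \<omega> $ a \<partial>M)))
          has_integral ((\<integral>\<omega>. X T \<omega> $ a * X T \<omega> $ b \<partial>M) - x$a * x$b)) {0..T}"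
proof -
  have "((\<lambda>s. \<integral>\<omega>. WFgen \<theta> P (\<lambda>y. y$a * y$b) (X s \<omega>) \<partial>M) has_integral
           ((\<integral>\<omega>. X T \<omega> $ a * X T \<omega> $ b \<partial>M) - x$a * x$b)) {0..T}"
    using WF T polyfun_quad[of a b] unfolding WF_process_def by blast
  then show ?thesis
  proof (rule has_integral_eq[rotated])
    fix s assume "s \<in> {0..T}"
    then have s: "s \<ge> 0" by auto
    note I = WF_int[OF WF s]
    have e: "WFgen \<theta> P (\<lambda>y. y$a * y$b) (X s \<omega>) =
       (if a = b then X s \<omega> $ a else 0) - X s \<omega> $ a * X s \<omega> $ b
        + (\<Sum>j\<in>UNIV. gammaM \<theta> P $ j $ a * (X s \<omega> $ j * X s \<omega> $ b))
        + (\<Sum>j\<in>UNIV. gammaM \<theta> P $ j $ b * (X s \<omega> $ j * X s \<omega> $ a))" for \<omega>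
      unfolding WFgen_quad by (simp add: sum_distrib_left sum_distrib_right mult_ac)
    show "(\<integral>\<omega>. WFgen \<theta> P (\<lambda>y. y$a * y$b) (X s \<omega>) \<partial>M) = (if a = b then (\<integral>\<omega>. X s \<omega> $ a \<partial>M) else 0) - (\<integral>\<omega>. X s \<omega> $ a * X s \<omega> $ b \<partial>M)
            + (\<Sum>j\<in>UNIV. gammaM \<theta> P $ j $ a * (\<integral>\<omega>. X s \<omega> $ j * X s \<omega> $ b \<partial>M))
            + (\<Sum>j\<in>UNIV. gammaM \<theta> P $ j $ b * (\<integral>\<omega>. X s \<omega> $ j * X s \<omega> $ a \<partial>M))"
    proof -
      let ?f1 = "\<lambda>\<omega>. if a = b then X s \<omega> $ a else 0"
      let ?f2 = "\<lambda>\<omega>. X s \<omega> $ a * X s \<omega> $ b"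
      let ?f3 = "\<lambda>\<omega>. \<Sum>j\<in>UNIV. gammaM \<theta> P $ j $ a * (X s \<omega> $ j * X s \<omega> $ b)"
      let ?f4 = "\<lambda>\<omega>. \<Sum>j\<in>UNIV. gammaM \<theta> P $ j $ b * (X s \<omega> $ j * X s \<omega> $ a)"
      have i1: "integrable M ?f1" by (cases "a = b") (simp_all add: I(1))
      have s1: "integral\<^sup>L M ?f1 = (if a = b then (\<integral>\<omega>. X s \<omega> $ a \<partial>M) else 0)" by (cases "a = b") simp_all
      have i2: "integrable M ?f2" by (rule I(2))
      have i3: "integrable M ?f3" by (rule Bochner_Integration.integrable_sum, rule integrable_mult_right, rule I(2))
      have i4: "integrable M ?f4" by (rule Bochner_Integration.integrable_sum, rule integrable_mult_right, rule I(2))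
      have s3: "integral\<^sup>L M ?f3 = (\<Sum>j\<in>UNIV. gammaM \<theta> P $ j $ a * (\<integral>\<omega>. X s \<omega> $ j * X s \<omega> $ b \<partial>M))"
        by (simp add: integral_sum integrable_mult_right I(2))
      have s4: "integral\<^sup>L M ?f4 = (\<Sum>j\<in>UNIV. gammaM \<theta> P $ j $ b * (\<integral>\<omega>. X s \<omega> $ j * X s \<omega> $ a \<partial>M))"
        by (simp add: integral_sum integrable_mult_right I(2))
      have "(\<integral>\<omega>. ?f1 \<omega> - ?f2 \<omega> + ?f3 \<omega> + ?f4 \<omega> \<partial>M) = (\<integral>\<omega>. ?f1 \<omega> - ?f2 \<omega> + ?f3 \<omega> \<partial>M) + integral\<^sup>L M ?f4"
        by (rule Bochner_Integration.integral_add) (rule Bochner_Integration.integrable_add[OF Bochner_Integration.integrable_diff[OF i1 i2] i3], rule i4)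
      also have "(\<integral>\<omega>. ?f1 \<omega> - ?f2 \<omega> + ?f3 \<omega> \<partial>M) = (\<integral>\<omega>. ?f1 \<omega> - ?f2 \<omega> \<partial>M) + integral\<^sup>L M ?f3"
        by (rule Bochner_Integration.integral_add) (rule Bochner_Integration.integrable_diff[OF i1 i2], rule i3)
      also have "(\<integral>\<omega>. ?f1 \<omega> - ?f2 \<omega> \<partial>M) = integral\<^sup>L M ?f1 - integral\<^sup>L M ?f2"
        by (rule Bochner_Integration.integral_diff[OF i1 i2])
      finally show ?thesis by (simp only: e s1 s3 s4)
    qed
  qed
qed

definition wf :: "real^'d \<Rightarrow> ('d \<Rightarrow> 'd \<Rightarrow> real) \<Rightarrow> 'd::finite \<Rightarrow> real" where
  "wf x q a = (\<Sum>j\<in>UNIV. x$j * q j a)"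

definition S0f :: "real^'d::finite \<Rightarrow> 'd \<Rightarrow> 'd \<Rightarrow> real \<Rightarrow> real" where
  "S0f x a b s = exp (-s) * x$a * x$b + (if a = b then (1 - exp (-s)) * x$a else 0)"

definition G0f :: "real^'d::finite \<Rightarrow> ('d \<Rightarrow> 'd \<Rightarrow> real) \<Rightarrow> 'd \<Rightarrow> 'd \<Rightarrow> real \<Rightarrow> real" where
  "G0f x q a b s = exp (-s) * wf x q a * x$b + (1 - exp (-s)) * q b a * x$b"

definition S1f :: "real^'d::finite \<Rightarrow> ('d \<Rightarrow> 'd \<Rightarrow> real) \<Rightarrow> 'd \<Rightarrow> 'd \<Rightarrow> real \<Rightarrow> real" where
  "S1f x q a b s = (if a = b then (s - 1 + exp (-s)) * wf x q a / 2 else 0)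
     + s * exp (-s) / 2 * (wf x q a * x$b + x$a * wf x q b)
     + (1 - (1 + s) * exp (-s)) / 2 * (q b a * x$b + x$a * q a b)"

lemma G0f_sum: "(\<Sum>j\<in>UNIV. q j a * S0f x j b s) = G0f x q a b s"
proof -
  have "(\<Sum>j\<in>UNIV. q j a * S0f x j b s) = (\<Sum>j\<in>UNIV. exp (-s) * x$b * (x$j * q j a))
       + (\<Sum>j\<in>UNIV. if j = b then q j a * ((1 - exp (-s)) * x$j) else 0)"
    unfolding S0f_def sum.distrib[symmetric] by (rule sum.cong) (auto simp: algebra_simps)
  also have "\<dots> = G0f x q a b s"
    unfolding G0f_def wf_def sum_distrib_left[symmetric] by (simp add: algebra_simps)
  finally show ?thesis .
qed

lemma S0f_deriv: "((\<lambda>s. S0f x a b s) has_real_derivative ((if a = b then x$a else 0) - S0f x a b s)) (at s within A)"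
proof -
  have "((\<lambda>s. S0f x a b s) has_real_derivative
      (exp (-s) * (-1) * x$a * x$b + (if a = b then (- (exp (-s) * (-1))) * x$a else 0))) (at s within A)"
    unfolding S0f_def by (cases "a = b") (auto intro!: derivative_eq_intros)
  then show ?thesis by (cases "a = b") (simp_all add: S0f_def algebra_simps)
qed

lemma S0f_0: "S0f x a b 0 = x$a * x$b"
  by (simp add: S0f_def)

lemma S1f_0: "S1f x q a b 0 = 0"
  by (simp add: S1f_def)

definition h1 :: "real \<Rightarrow> real" where "h1 s = s - 1 + exp (-s)"
definition h2 :: "real \<Rightarrow> real" where "h2 s = s * exp (-s)"
definition h3 :: "real \<Rightarrow> real" where "h3 s = 1 - (1 + s) * exp (-s)"

lemma h1d: "(h1 has_real_derivative (1 - exp (-s))) (at s within A)"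
  unfolding h1_def by (auto intro!: derivative_eq_intros)
lemma h2d: "(h2 has_real_derivative (exp (-s) - s * exp (-s))) (at s within A)"
  unfolding h2_def by (auto intro!: derivative_eq_intros simp: algebra_simps)
lemma h3d: "(h3 has_real_derivative (s * exp (-s))) (at s within A)"
  unfolding h3_def by (auto intro!: derivative_eq_intros simp: algebra_simps)

lemma S1f_alt: "S1f x q a b = (\<lambda>s. h1 s * (if a = b then wf x q a / 2 else 0)
     + h2 s * ((wf x q a * x$b + x$a * wf x q b) / 2) + h3 s * ((q b a * x$b + x$a * q a b) / 2))"
  by (rule ext) (simp add: S1f_def h1_def h2_def h3_def)

lemma S1f_deriv: "((\<lambda>s. S1f x q a b s) has_real_derivative
    ((if a = b then s * wf x q a / 2 else 0) + (G0f x q a b s + G0f x q b a s) / 2 - S1f x q a b s)) (at s within A)"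
proof -
  have "((\<lambda>s. S1f x q a b s) has_real_derivative
      ((1 - exp (-s)) * (if a = b then wf x q a / 2 else 0)
     + (exp (-s) - s * exp (-s)) * ((wf x q a * x$b + x$a * wf x q b) / 2)
     + (s * exp (-s)) * ((q b a * x$b + x$a * q a b) / 2))) (at s within A)"
    unfolding S1f_alt
    by (intro DERIV_add DERIV_cmult_right h1d h2d h3d)
  then show ?thesis
    by (cases "a = b") (simp_all add: S1f_def G0f_def algebra_simps add_divide_distrib diff_divide_distrib)
qed

lemma sum_abs_bound: "(\<And>j. \<bar>f j\<bar> \<le> c) \<Longrightarrow> \<bar>\<Sum>j\<in>(UNIV::'d::finite set). f j\<bar> \<le> real CARD('d) * (c::real)"
proof -
  assume h: "\<And>j. \<bar>f j\<bar> \<le> c"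
  have "\<bar>\<Sum>j\<in>(UNIV::'d set). f j\<bar> \<le> (\<Sum>j\<in>(UNIV::'d set). \<bar>f j\<bar>)" by (rule sum_abs)
  also have "\<dots> \<le> (\<Sum>j\<in>(UNIV::'d set). c)" by (rule sum_mono) (rule h)
  finally show ?thesis by simp
qed

lemma gam_comp: "gammaM \<theta> P $ j $ i = \<theta> / 2 * (P$j$i - (if j = i then 1 else 0))"
  by (simp add: gammaM_def mat_def)

lemma q_bound: "stochastic P \<Longrightarrow> \<bar>P$j$i - (if j = i then 1 else 0)\<bar> \<le> 1"
proof -
  assume P: "stochastic P"
  then have nn: "\<forall>i j. 0 \<le> P$i$j" and s: "(\<Sum>k\<in>UNIV. P$j$k) = 1" by (auto simp: stochastic_def)
  have "P$j$i \<le> (\<Sum>k\<in>UNIV. P$j$k)" by (rule member_le_sum) (use nn in auto)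
  then show ?thesis using nn s by auto
qed

lemma init_val: "(g has_integral (v - (c::real))) {0..(0::real)} \<Longrightarrow> v = c"
proof -
  assume "(g has_integral (v - c)) {0..(0::real)}"
  then have "(g has_integral (v - c)) {0::real}" by simp
  from has_integral_unique[OF this has_integral_refl(2)] show ?thesis by simp
qed

lemma qmul: "\<bar>u\<bar> \<le> 1 \<Longrightarrow> \<bar>v\<bar> \<le> c \<Longrightarrow> \<bar>u * v\<bar> \<le> (c::real)"
proof -
  assume u: "\<bar>u\<bar> \<le> 1" and v: "\<bar>v\<bar> \<le> c"
  have "\<bar>u\<bar> * \<bar>v\<bar> \<le> 1 * \<bar>v\<bar>" by (rule mult_right_mono[OF u]) simp
  then show ?thesis using v by (simp add: abs_mult)
qed

lemma half_sum_bound: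
  assumes th: "\<theta> \<ge> 0" and h: "\<And>j. \<bar>f j\<bar> \<le> c"
  shows "\<bar>\<theta> / 2 * (\<Sum>j\<in>(UNIV::'d::finite set). f j)\<bar> \<le> \<theta> / 2 * (real CARD('d) * (c::real))"
proof -
  have "\<bar>\<theta> / 2 * (\<Sum>j\<in>(UNIV::'d set). f j)\<bar> = \<theta> / 2 * \<bar>\<Sum>j\<in>(UNIV::'d set). f j\<bar>"
    using th by (simp add: abs_mult)
  also have "\<dots> \<le> \<theta> / 2 * (real CARD('d) * c)"
    by (rule mult_left_mono[OF sum_abs_bound[OF h]]) (use th in simp)
  finally show ?thesis .
qed

lemma per_theta:
  fixes \<theta> t :: real and P :: "real^'d::finite^'d" and x :: "real^'d" and M :: "'w measure"
    and X :: "real \<Rightarrow> 'w \<Rightarrow> real^'d"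
  assumes th: "\<theta> > 0" and WF: "WF_process \<theta> P x M X" and P: "stochastic P" and t: "t \<ge> 0"
  shows "\<bar>(\<integral>\<omega>. X t \<omega> $ a * X t \<omega> $ b \<partial>M) - S0f x a b t
            - \<theta> * S1f x (\<lambda>j i. P$j$i - (if j = i then 1 else 0)) a b t\<bar>
         \<le> \<theta>^2 * ((real CARD('d) * real CARD('d) * t * t
                 + real CARD('d) * (real CARD('d) * (t + 1) * t)) * t)"
proof -
  define q where "q = (\<lambda>j i. P$j$i - (if j = i then 1 else (0::real)))"
  define D where "D = real CARD('d)"
  have D0: "D \<ge> 0" unfolding D_def by simp
  define mu where "mu a s = (\<integral>\<omega>. X s \<omega> $ a \<partial>M)" for a s
  define S where "S a b s = (\<integral>\<omega>. X s \<omega> $ a * X s \<omega> $ b \<partial>M)" for a b s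
  define g1 where "g1 a s = \<theta> / 2 * (\<Sum>j\<in>UNIV. q j a * mu j s)" for a s
  define g2 where "g2 a b s = (if a = b then mu a s else 0) - S a b s
      + \<theta> / 2 * (\<Sum>j\<in>UNIV. q j a * S j b s) + \<theta> / 2 * (\<Sum>j\<in>UNIV. q j b * S j a s)" for a b s
  have gam: "gammaM \<theta> P $ j $ i = \<theta> / 2 * q j i" for j i by (simp add: gam_comp q_def)
  have qb: "\<bar>q j i\<bar> \<le> 1" for j i unfolding q_def by (rule q_bound[OF P])
  have mub: "\<bar>mu a s\<bar> \<le> 1" if "s \<ge> 0" for a s unfolding mu_def by (rule WF_int(3)[OF WF that])
  have Sb: "\<bar>S a b s\<bar> \<le> 1" if "s \<ge> 0" for a b s unfolding S_def by (rule WF_int(4)[OF WF that])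
  have h1: "(g1 a has_integral (mu a s - x$a)) {0..s}" if "0 \<le> s" for a s
  proof -
    have "((\<lambda>s. \<Sum>j\<in>UNIV. gammaM \<theta> P $ j $ a * (\<integral>\<omega>. X s \<omega> $ j \<partial>M))
          has_integral ((\<integral>\<omega>. X s \<omega> $ a \<partial>M) - x$a)) {0..s}" by (rule WF_mom1[OF WF that])
    then show ?thesis unfolding g1_def mu_def gam sum_distrib_left by (simp add: mult.assoc)
  qed
  have h2: "(g2 a b has_integral (S a b s - x$a * x$b)) {0..s}" if "0 \<le> s" for a b s
  proof -
    have "((\<lambda>s. (if a = b then (\<integral>\<omega>. X s \<omega> $ a \<partial>M) else 0) - (\<integral>\<omega>. X s \<omega> $ a * X s \<omega> $ b \<partial>M)
            + (\<Sum>j\<in>UNIV. gammaM \<theta> P $ j $ a * (\<integral>\<omega>. X s \<omega> $ j * X s \<omega> $ b \<partial>M))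
            + (\<Sum>j\<in>UNIV. gammaM \<theta> P $ j $ b * (\<integral>\<omega>. X s \<omega> $ j * X s \<omega> $ a \<partial>M)))
          has_integral ((\<integral>\<omega>. X s \<omega> $ a * X s \<omega> $ b \<partial>M) - x$a * x$b)) {0..s}"
      by (rule WF_mom2[OF WF that])
    then show ?thesis unfolding g2_def mu_def S_def gam sum_distrib_left by (simp add: mult.assoc)
  qed
  have mu0: "mu a 0 = x$a" for a using h1[of 0 a] by (intro init_val) simp
  have S0: "S a b 0 = x$a * x$b" for a b using h2[of 0 a b] by (intro init_val) simp
  have muc: "continuous_on {0..t} (\<lambda>s. mu a s)" for a by (rule int_cont[OF t h1]) auto
  have Sc: "continuous_on {0..t} (\<lambda>s. S a b s)" for a b by (rule int_cont[OF t h2]) auto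
  have g1c: "continuous_on {0..t} (g1 a)" for a unfolding g1_def by (intro continuous_intros muc)
  have g2c: "continuous_on {0..t} (g2 a b)" for a b unfolding g2_def by (cases "a = b") (auto intro!: continuous_intros muc Sc)
  have d1: "(mu a has_real_derivative g1 a z) (at z within {0..t})" if "z \<in> {0..t}" for a z
    by (rule int_deriv[OF t h1 g1c that]) auto
  have d2: "(S a b has_real_derivative g2 a b z) (at z within {0..t})" if "z \<in> {0..t}" for a b z
    by (rule int_deriv[OF t h2 g2c that]) auto
  have st1: "\<bar>mu a z - x$a\<bar> \<le> \<theta> * D * t" if z: "z \<in> {0..t}" for a z
  proof -
    have "\<bar>g1 a y\<bar> \<le> \<theta> * D" if "y \<in> {0..t}" for y
    proof -
      have "\<bar>g1 a y\<bar> \<le> \<theta> / 2 * (D * 1)" unfolding g1_def D_def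
        by (rule half_sum_bound) (use th that in \<open>auto intro!: qmul qb mub\<close>)
      also have "\<dots> \<le> \<theta> * D" using th D0 by simp
      finally show ?thesis .
    qed
    then have "\<bar>mu a z - mu a 0\<bar> \<le> \<theta> * D * z" by (intro mvt_bound[OF d1 _ z])
    also have "\<dots> \<le> \<theta> * D * t" using z th D0 by (intro mult_left_mono) auto
    finally show ?thesis by (simp add: mu0)
  qed
  have st2: "\<bar>mu a z - x$a - \<theta> * z * wf x q a / 2\<bar> \<le> \<theta>^2 * (D * D * t * t)" if z: "z \<in> {0..t}" for a z
  proof -
    have dd: "((\<lambda>y. mu a y - \<theta> * y * wf x q a / 2) has_real_derivative
        \<theta> / 2 * (\<Sum>j\<in>UNIV. q j a * (mu j y - x$j))) (at y within {0..t})" if "y \<in> {0..t}" for y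
    proof (rule DERIV_cong)
      show "((\<lambda>y. mu a y - \<theta> * y * wf x q a / 2) has_real_derivative g1 a y - \<theta> * 1 * wf x q a / 2) (at y within {0..t})"
        by (intro DERIV_diff d1[OF that] DERIV_cdivide DERIV_cmult_right DERIV_cmult DERIV_ident)
      show "g1 a y - \<theta> * 1 * wf x q a / 2 = \<theta> / 2 * (\<Sum>j\<in>UNIV. q j a * (mu j y - x$j))"
        unfolding g1_def wf_def by (simp add: right_diff_distrib sum_subtractf sum_distrib_left mult_ac)
    qed
    have "\<bar>\<theta> / 2 * (\<Sum>j\<in>UNIV. q j a * (mu j y - x$j))\<bar> \<le> \<theta>^2 * (D * D * t)" if "y \<in> {0..t}" for y
    proof -
      have "\<bar>\<theta> / 2 * (\<Sum>j\<in>UNIV. q j a * (mu j y - x$j))\<bar> \<le> \<theta> / 2 * (D * (\<theta> * D * t))" unfolding D_def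
        by (rule half_sum_bound) (use th that st1 in \<open>auto intro!: qmul qb simp: D_def\<close>)
      also have "\<dots> \<le> \<theta>^2 * (D * D * t)" using th D0 t by (simp add: power2_eq_square mult_ac)
      finally show ?thesis .
    qed
    then have "\<bar>(mu a z - \<theta> * z * wf x q a / 2) - (mu a 0 - \<theta> * 0 * wf x q a / 2)\<bar> \<le> \<theta>^2 * (D * D * t) * z"
      by (intro mvt_bound[OF dd _ z])
    also have "\<dots> \<le> \<theta>^2 * (D * D * t) * t" using z th D0 t by (intro mult_left_mono) auto
    finally show ?thesis by (simp add: mu0 mult_ac)
  qed
  have st3: "\<bar>S a b z - S0f x a b z\<bar> \<le> \<theta> * (D * (t + 1) * t)" if z: "z \<in> {0..t}" for a b z
  proof -
    define r where "r y = (if a = b then mu a y - x$a else 0)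
      + \<theta> / 2 * (\<Sum>j\<in>UNIV. q j a * S j b y) + \<theta> / 2 * (\<Sum>j\<in>UNIV. q j b * S j a y)" for y
    have dd: "((\<lambda>y. S a b y - S0f x a b y) has_real_derivative r y - (S a b y - S0f x a b y)) (at y within {0..t})"
      if "y \<in> {0..t}" for y
    proof (rule DERIV_cong)
      show "((\<lambda>y. S a b y - S0f x a b y) has_real_derivative g2 a b y - ((if a = b then x$a else 0) - S0f x a b y)) (at y within {0..t})"
        by (intro DERIV_diff d2[OF that] S0f_deriv)
      show "g2 a b y - ((if a = b then x$a else 0) - S0f x a b y) = r y - (S a b y - S0f x a b y)"
        unfolding g2_def r_def by (cases "a = b") simp_all
    qed
    have rb: "\<bar>r y\<bar> \<le> \<theta> * (D * (t + 1))" if y: "y \<in> {0..t}" for y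
    proof -
      have 1: "\<bar>(if a = b then mu a y - x$a else 0)\<bar> \<le> \<theta> * D * t" using st1[OF y] th D0 t by auto
      have 2: "\<bar>\<theta> / 2 * (\<Sum>j\<in>UNIV. q j a * S j b y)\<bar> \<le> \<theta> / 2 * (D * 1)" unfolding D_def
        by (rule half_sum_bound) (use th y in \<open>auto intro!: qmul qb Sb\<close>)
      have 3: "\<bar>\<theta> / 2 * (\<Sum>j\<in>UNIV. q j b * S j a y)\<bar> \<le> \<theta> / 2 * (D * 1)" unfolding D_def
        by (rule half_sum_bound) (use th y in \<open>auto intro!: qmul qb Sb\<close>)
      have "\<bar>r y\<bar> \<le> \<theta> * D * t + \<theta> / 2 * (D * 1) + \<theta> / 2 * (D * 1)"
        unfolding r_def using 1 2 3 by linarith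
      then show ?thesis by (simp add: algebra_simps)
    qed
    have "\<bar>S a b z - S0f x a b z\<bar> \<le> \<theta> * (D * (t + 1)) * z"
      by (rule decay_bound[OF dd rb _ z]) (simp_all add: S0 S0f_0)
    also have "\<dots> \<le> \<theta> * (D * (t + 1)) * t" using z th D0 t by (intro mult_left_mono) auto
    finally show ?thesis by (simp add: mult_ac)
  qed
  define r where "r y = (if a = b then mu a y - x$a - \<theta> * y * wf x q a / 2 else 0)
      + \<theta> / 2 * (\<Sum>j\<in>UNIV. q j a * (S j b y - S0f x j b y)) + \<theta> / 2 * (\<Sum>j\<in>UNIV. q j b * (S j a y - S0f x j a y))" for y
  define e where "e y = S a b y - S0f x a b y - \<theta> * S1f x q a b y" for y
  have dd: "(e has_real_derivative r y - e y) (at y within {0..t})" if "y \<in> {0..t}" for y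
  proof (rule DERIV_cong)
    show "(e has_real_derivative g2 a b y - ((if a = b then x$a else 0) - S0f x a b y)
       - \<theta> * ((if a = b then y * wf x q a / 2 else 0) + (G0f x q a b y + G0f x q b a y) / 2 - S1f x q a b y)) (at y within {0..t})"
      unfolding e_def by (intro DERIV_diff d2[OF that] S0f_deriv DERIV_cmult S1f_deriv)
    have s1: "(\<Sum>j\<in>UNIV. q j a * (S j b y - S0f x j b y)) = (\<Sum>j\<in>UNIV. q j a * S j b y) - G0f x q a b y"
      by (simp add: right_diff_distrib sum_subtractf G0f_sum)
    have s2: "(\<Sum>j\<in>UNIV. q j b * (S j a y - S0f x j a y)) = (\<Sum>j\<in>UNIV. q j b * S j a y) - G0f x q b a y"
      by (simp add: right_diff_distrib sum_subtractf G0f_sum)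
    show "g2 a b y - ((if a = b then x$a else 0) - S0f x a b y)
       - \<theta> * ((if a = b then y * wf x q a / 2 else 0) + (G0f x q a b y + G0f x q b a y) / 2 - S1f x q a b y)
       = r y - e y"
      unfolding g2_def r_def e_def s1 s2 by (cases "a = b") (simp_all add: algebra_simps)
  qed
  have rb: "\<bar>r y\<bar> \<le> \<theta>^2 * (D * D * t * t + D * (D * (t + 1) * t))" if y: "y \<in> {0..t}" for y
  proof -
    have 1: "\<bar>(if a = b then mu a y - x$a - \<theta> * y * wf x q a / 2 else 0)\<bar> \<le> \<theta>^2 * (D * D * t * t)"
      using st2[OF y] th D0 t by auto
    have 2: "\<bar>\<theta> / 2 * (\<Sum>j\<in>UNIV. q j a * (S j b y - S0f x j b y))\<bar> \<le> \<theta> / 2 * (D * (\<theta> * (D * (t + 1) * t)))"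
      unfolding D_def by (rule half_sum_bound) (use th y st3 in \<open>auto intro!: qmul qb simp: D_def\<close>)
    have 3: "\<bar>\<theta> / 2 * (\<Sum>j\<in>UNIV. q j b * (S j a y - S0f x j a y))\<bar> \<le> \<theta> / 2 * (D * (\<theta> * (D * (t + 1) * t)))"
      unfolding D_def by (rule half_sum_bound) (use th y st3 in \<open>auto intro!: qmul qb simp: D_def\<close>)
    have "\<bar>r y\<bar> \<le> \<theta>^2 * (D * D * t * t) + \<theta> / 2 * (D * (\<theta> * (D * (t + 1) * t))) + \<theta> / 2 * (D * (\<theta> * (D * (t + 1) * t)))"
      unfolding r_def using 1 2 3 by linarith
    then show ?thesis by (simp add: algebra_simps power2_eq_square)
  qed
  have "\<bar>e t\<bar> \<le> \<theta>^2 * (D * D * t * t + D * (D * (t + 1) * t)) * t"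
    by (rule decay_bound[OF dd rb]) (use t in \<open>simp_all add: e_def S0 S0f_0 S1f_0\<close>)
  then show ?thesis unfolding e_def S_def D_def q_def by (simp add: mult_ac)
qed

lemma mpow_0: "mpow A 0 = mat 1" by (simp add: mpow_def)
lemma mpow_Suc: "mpow A (Suc k) = A ** mpow A k" by (simp add: mpow_def)

lemma mpow_scale: "mpow (c *\<^sub>R A) k = (c ^ k) *\<^sub>R mpow A k"
  by (induction k) (simp_all add: mpow_0 mpow_Suc matrix_scalar_ac scalar_matrix_assoc mult.commute)

lemma mpow_bound:
  fixes Q :: "real^'d::finite^'d"
  assumes Q: "\<And>i j. \<bar>Q$i$j\<bar> \<le> 1"
  shows "\<bar>mpow Q k $ i $ j\<bar> \<le> real CARD('d) ^ k"
proof (induction k arbitrary: i j)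
  case 0
  then show ?case by (simp add: mpow_0 mat_def)
next
  case (Suc k)
  have "mpow Q (Suc k) $ i $ j = (\<Sum>l\<in>UNIV. Q$i$l * mpow Q k $ l $ j)"
    by (simp add: mpow_Suc matrix_matrix_mult_def)
  also have "\<bar>\<dots>\<bar> \<le> real CARD('d) * real CARD('d) ^ k"
    by (rule sum_abs_bound) (intro qmul Q Suc.IH)
  finally show ?case by simp
qed

lemma abs_suminf_bound:
  fixes h bnd :: "nat \<Rightarrow> real"
  assumes hb: "\<And>k. \<bar>h k\<bar> \<le> bnd k" and sb: "summable bnd"
  shows "summable h" "\<bar>suminf h\<bar> \<le> suminf bnd"
proof -
  show sh: "summable h" by (rule summable_comparison_test'[OF sb]) (use hb in auto)
  have u: "h k \<le> bnd k" for k using hb[of k] by linarith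
  have l: "- bnd k \<le> h k" for k using hb[of k] by linarith
  have "suminf h \<le> suminf bnd" by (rule suminf_le[OF u sh sb])
  moreover have "suminf (\<lambda>k. - bnd k) \<le> suminf h"
    by (rule suminf_le[OF l summable_minus[OF sb] sh])
  ultimately show "\<bar>suminf h\<bar> \<le> suminf bnd" using suminf_minus[OF sb] by auto
qed

lemma mexp_comp:
  fixes Q :: "real^'d::finite^'d"
  assumes Q: "\<And>i j. \<bar>Q$i$j\<bar> \<le> 1"
  shows "(\<lambda>k. c ^ k / fact k * mpow Q k $ i $ j) sums (mexp (c *\<^sub>R Q) $ i $ j)"
proof -
  define D where "D = real CARD('d)"
  define f where "f k = (1 / fact k) *\<^sub>R mpow (c *\<^sub>R Q) k" for k
  have fc: "f k $ i $ j = c ^ k / fact k * mpow Q k $ i $ j" for k i j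
    by (simp add: f_def mpow_scale)
  have sm: "summable (\<lambda>k. f k $ i $ j)" for i j
  proof (rule summable_comparison_test'[of "\<lambda>k. inverse (fact k) * (\<bar>c\<bar> * D) ^ k" 0])
    show "summable (\<lambda>k. inverse (fact k) * (\<bar>c\<bar> * D) ^ k)" by (rule summable_exp)
    fix k :: nat
    have "norm (f k $ i $ j) = \<bar>c\<bar> ^ k / fact k * \<bar>mpow Q k $ i $ j\<bar>"
      by (simp add: fc abs_mult power_abs)
    also have "\<dots> \<le> \<bar>c\<bar> ^ k / fact k * D ^ k"
      by (rule mult_left_mono) (use mpow_bound[OF Q] in \<open>auto simp: D_def\<close>)
    also have "\<dots> = inverse (fact k) * (\<bar>c\<bar> * D) ^ k" by (simp add: power_mult_distrib field_simps)
    finally show "norm (f k $ i $ j) \<le> inverse (fact k) * (\<bar>c\<bar> * D) ^ k" .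
  qed
  define L where "L = (\<chi> i j. \<Sum>k. f k $ i $ j)"
  have "f sums L"
    unfolding sums_def
  proof (rule vec_tendstoI, rule vec_tendstoI)
    fix i j
    have "(\<lambda>k. f k $ i $ j) sums (L $ i $ j)" unfolding L_def using sm[of i j] by (simp add: summable_sums)
    then show "((\<lambda>n. (\<Sum>k<n. f k) $ i $ j) \<longlongrightarrow> L $ i $ j) sequentially"
      unfolding sums_def by (simp add: sum_component)
  qed
  then have "mexp (c *\<^sub>R Q) = L" unfolding mexp_def f_def[symmetric] by (simp add: sums_iff)
  then have "mexp (c *\<^sub>R Q) $ i $ j = (\<Sum>k. f k $ i $ j)" by (simp add: L_def)
  then show ?thesis using sm[of i j] fc by (simp add: summable_sums)
qed

lemma mexp_entry_bound:
  fixes Q :: "real^'d::finite^'d"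
  assumes Q: "\<And>i j. \<bar>Q$i$j\<bar> \<le> 1"
  shows "\<bar>mexp (c *\<^sub>R Q) $ i $ j - (if i = j then 1 else 0) - c * Q$i$j\<bar>
     \<le> (\<bar>c\<bar> * real CARD('d))^2 * exp (\<bar>c\<bar> * real CARD('d))"
proof -
  define D where "D = real CARD('d)"
  define g where "g k = c ^ k / fact k * mpow Q k $ i $ j" for k
  have gs: "g sums (mexp (c *\<^sub>R Q) $ i $ j)" unfolding g_def by (rule mexp_comp[OF Q])
  have tail: "(\<lambda>k. g (k + 2)) sums (mexp (c *\<^sub>R Q) $ i $ j - (g 0 + g 1))"
    using sums_split_initial_segment[OF gs, of 2] by (simp add: numeral_2_eq_2)
  have g0: "g 0 = (if i = j then 1 else 0)" by (simp add: g_def mpow_0 mat_def)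
  have g1: "g 1 = c * Q$i$j" by (simp add: g_def mpow_Suc mpow_0)
  define bnd where "bnd k = (\<bar>c\<bar> * D)^2 * (inverse (fact k) * (\<bar>c\<bar> * D) ^ k)" for k
  have bs: "summable bnd" unfolding bnd_def by (intro summable_mult summable_exp)
  have bsum: "suminf bnd = (\<bar>c\<bar> * D)^2 * exp (\<bar>c\<bar> * D)"
  proof -
    have "(\<lambda>k. inverse (fact k) * (\<bar>c\<bar> * D) ^ k) sums exp (\<bar>c\<bar> * D)"
      using exp_converges[of "\<bar>c\<bar> * D"] by (simp add: field_simps)
    then show ?thesis unfolding bnd_def by (simp add: sums_iff suminf_mult)
  qed
  have hb: "\<bar>g (k + 2)\<bar> \<le> bnd k" for k
  proof -
    have f: "fact k \<le> (fact (k + 2) :: real)" by (rule fact_mono) simp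
    have fk: "(0::real) < fact k" by simp
    have "\<bar>g (k + 2)\<bar> = \<bar>c\<bar> ^ (k + 2) / fact (k + 2) * \<bar>mpow Q (k + 2) $ i $ j\<bar>"
      by (simp add: g_def abs_mult power_abs)
    also have "\<dots> \<le> \<bar>c\<bar> ^ (k + 2) / fact (k + 2) * D ^ (k + 2)"
    proof -
      have mb: "\<bar>mpow Q (k + 2) $ i $ j\<bar> \<le> D ^ (k + 2)" unfolding D_def by (rule mpow_bound[OF Q])
      show ?thesis by (rule mult_left_mono[OF mb]) simp
    qed
    also have "\<dots> \<le> \<bar>c\<bar> ^ (k + 2) / fact k * D ^ (k + 2)"
      by (intro mult_right_mono divide_left_mono f) (auto simp: D_def)
    also have "\<dots> = bnd k" by (simp add: bnd_def power_add power_mult_distrib power2_eq_square field_simps)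
    finally show ?thesis .
  qed
  have "\<bar>suminf (\<lambda>k. g (k + 2))\<bar> \<le> suminf bnd" by (rule abs_suminf_bound(2)[OF hb bs])
  moreover have "suminf (\<lambda>k. g (k + 2)) = mexp (c *\<^sub>R Q) $ i $ j - (g 0 + g 1)" using tail by (simp add: sums_iff)
  ultimately show ?thesis unfolding bsum g0 g1 D_def by (simp add: algebra_simps)
qed

lemma mult_aa: "mult (\<lambda>j. 2 * unitv a j) (y::real^'d::finite) = y$a * y$a"
proof -
  have s: "(\<Sum>j\<in>(UNIV::'d set). 2 * unitv a j) = 2" by (simp add: unitv_def sum_distrib_left[symmetric])
  have f: "(\<Prod>j\<in>(UNIV::'d set). fact (2 * unitv a j)) = (2::real)"
  proof -
    have "(\<Prod>j\<in>(UNIV::'d set). fact (2 * unitv a j)) = (\<Prod>j\<in>(UNIV::'d set). if j = a then 2 else (1::real))"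
      by (rule prod.cong) (auto simp: unitv_def)
    then show ?thesis by simp
  qed
  have p: "(\<Prod>j\<in>(UNIV::'d set). y$j ^ (2 * unitv a j)) = y$a * y$a"
  proof -
    have "(\<Prod>j\<in>(UNIV::'d set). y$j ^ (2 * unitv a j)) = (\<Prod>j\<in>(UNIV::'d set). if j = a then y$a * y$a else 1)"
      by (rule prod.cong) (auto simp: unitv_def power2_eq_square)
    then show ?thesis by simp
  qed
  show ?thesis unfolding mult_def s f p by simp
qed

lemma mult_ab: "a \<noteq> b \<Longrightarrow> mult (\<lambda>j. unitv a j + unitv b j) (y::real^'d::finite) = 2 * (y$a * y$b)"
proof -
  assume ab: "a \<noteq> b"
  have s: "(\<Sum>j\<in>(UNIV::'d set). unitv a j + unitv b j) = 2" using ab by (simp add: unitv_def sum.distrib)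
  have f: "(\<Prod>j\<in>(UNIV::'d set). fact (unitv a j + unitv b j)) = (1::real)"
    by (rule prod.neutral) (use ab in \<open>auto simp: unitv_def\<close>)
  have p: "(\<Prod>j\<in>(UNIV::'d set). y$j ^ (unitv a j + unitv b j)) = y$a * y$b"
    by (simp add: power_add prod.distrib unitv_def prod_delta_pow)
  show ?thesis unfolding mult_def s f p by simp
qed

lemma small_from_bound:
  fixes f :: "real \<Rightarrow> real"
  assumes C: "C \<ge> 0" and b: "\<And>\<theta>. 0 < \<theta> \<Longrightarrow> \<theta> \<le> 1 \<Longrightarrow> \<bar>f \<theta>\<bar> \<le> C * \<theta>^2"
  shows "f \<in> o[at_right 0](\<lambda>\<theta>. \<theta>)"
proof (rule landau_o.smallI)
  fix c :: real assume c: "c > 0"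
  show "eventually (\<lambda>\<theta>. norm (f \<theta>) \<le> c * norm \<theta>) (at_right 0)"
    unfolding eventually_at_right_field
  proof (intro exI[of _ "min 1 (c / (C + 1))"] conjI allI impI)
    show "0 < min 1 (c / (C + 1))" using c C by simp
    fix \<theta> :: real assume th: "0 < \<theta>" "\<theta> < min 1 (c / (C + 1))"
    have "\<bar>f \<theta>\<bar> \<le> C * \<theta>^2" using b th by auto
    also have "\<dots> \<le> (C + 1) * \<theta> * \<theta>" using th C by (simp add: power2_eq_square mult_right_mono)
    also have "\<dots> \<le> c * \<theta>"
    proof -
      have "(C + 1) * \<theta> \<le> c" using th C by (simp add: field_simps)
      then show ?thesis using th by (intro mult_right_mono) auto
    qed
    finally show "norm (f \<theta>) \<le> c * norm \<theta>" using th by simp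
  qed
qed

lemma rho_bound:
  fixes P :: "real^'d::finite^'d"
  assumes P: "stochastic P" and t: "t \<ge> 0" and x: "x \<in> prob_simplex" and th: "0 < \<theta>" "\<theta> \<le> 1"
  shows "\<bar>(x v* mexp (t *\<^sub>R gammaM \<theta> P))$a - x$a - \<theta> * t / 2 * wf x (\<lambda>j i. P$j$i - (if j = i then 1 else 0)) a\<bar>
     \<le> \<theta>^2 * (real CARD('d) * (t * real CARD('d))^2 * exp (t * real CARD('d)))"
proof -
  define D where "D = real CARD('d)"
  have D0: "D \<ge> 0" by (simp add: D_def)
  define Q where "Q = P - mat 1"
  have Qc: "Q$i$j = P$i$j - (if i = j then 1 else 0)" for i j by (simp add: Q_def mat_def)
  have Qb: "\<bar>Q$i$j\<bar> \<le> 1" for i j unfolding Qc by (rule q_bound[OF P])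
  define c where "c = \<theta> * t / 2"
  have c0: "c \<ge> 0" using th t by (simp add: c_def)
  have tg: "t *\<^sub>R gammaM \<theta> P = c *\<^sub>R Q" by (simp add: gammaM_def Q_def c_def mult_ac)
  define B where "B = (\<bar>c\<bar> * D)^2 * exp (\<bar>c\<bar> * D)"
  have eb: "\<bar>mexp (c *\<^sub>R Q) $ i $ j - (if i = j then 1 else 0) - c * Q$i$j\<bar> \<le> B" for i j
    unfolding B_def D_def by (rule mexp_entry_bound[OF Qb])
  have xb: "\<bar>x$i\<bar> \<le> 1" for i using simplex_bd[OF x, of i] by auto
  have eq: "(x v* mexp (t *\<^sub>R gammaM \<theta> P))$a - x$a - \<theta> * t / 2 * wf x (\<lambda>j i. P$j$i - (if j = i then 1 else 0)) a
      = (\<Sum>i\<in>UNIV. x$i * (mexp (c *\<^sub>R Q) $ i $ a - (if i = a then 1 else 0) - c * Q$i$a))"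
  proof -
    have 1: "(\<Sum>i\<in>UNIV. x$i * (if i = a then 1 else 0)) = x$a" by (rule sdr)
    have 2: "\<theta> * t / 2 * wf x (\<lambda>j i. P$j$i - (if j = i then 1 else 0)) a = (\<Sum>i\<in>UNIV. x$i * (c * Q$i$a))"
      unfolding wf_def c_def Qc by (simp add: sum_distrib_left mult_ac)
    show ?thesis unfolding tg 2 vector_matrix_mult_def
      by (simp add: right_diff_distrib sum_subtractf 1)
  qed
  have "\<bar>\<Sum>i\<in>UNIV. x$i * (mexp (c *\<^sub>R Q) $ i $ a - (if i = a then 1 else 0) - c * Q$i$a)\<bar> \<le> D * B"
    unfolding D_def by (rule sum_abs_bound) (intro qmul xb eb)
  also have "\<dots> \<le> \<theta>^2 * (D * (t * D)^2 * exp (t * D))"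
  proof -
    have cD: "\<bar>c\<bar> * D \<le> \<theta> * (t * D)" using c0 th t D0 by (simp add: c_def mult_right_mono mult_ac)
    have "\<theta> * t \<le> 1 * t" by (rule mult_right_mono) (use th t in auto)
    then have ct: "c \<le> t" using t by (simp add: c_def)
    have cD2: "\<bar>c\<bar> * D \<le> t * D" using c0 ct D0 by (simp add: mult_right_mono)
    have "(\<bar>c\<bar> * D)^2 \<le> (\<theta> * (t * D))^2" by (rule power_mono[OF cD]) (use c0 D0 in simp)
    moreover have "exp (\<bar>c\<bar> * D) \<le> exp (t * D)" using cD2 by simp
    ultimately have "B \<le> (\<theta> * (t * D))^2 * exp (t * D)" unfolding B_def
      by (intro mult_mono) auto
    then have "D * B \<le> D * ((\<theta> * (t * D))^2 * exp (t * D))" by (rule mult_left_mono) (rule D0)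
    then show ?thesis by (simp add: power_mult_distrib mult_ac)
  qed
  finally show ?thesis unfolding eq D_def .
qed

lemma bnd_prod: "\<bar>u\<bar> \<le> U \<Longrightarrow> \<bar>v\<bar> \<le> V \<Longrightarrow> \<bar>u * v\<bar> \<le> U * (V::real)"
  by (simp add: abs_mult mult_mono')

lemma lin_small:
  fixes w r D K t \<theta> :: real
  assumes "\<bar>w\<bar> \<le> D" "\<bar>r\<bar> \<le> K * \<theta>^2" "0 < \<theta>" "\<theta> \<le> 1" "t \<ge> 0" "K \<ge> 0" "D \<ge> 0"
  shows "\<bar>\<theta> * t / 2 * w + r\<bar> \<le> \<theta> * (t * D + K)"
proof -
  have "\<bar>\<theta> * t / 2 * w\<bar> \<le> (\<theta> * t / 2) * D"
    using assms by (intro bnd_prod) auto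
  also have "\<dots> \<le> \<theta> * (t * D)" using assms by (simp add: mult_ac mult_right_mono)
  finally have 1: "\<bar>\<theta> * t / 2 * w\<bar> \<le> \<theta> * (t * D)" .
  have "K * \<theta>^2 \<le> K * \<theta>" using assms by (intro mult_left_mono) (auto simp: power2_eq_square mult_left_le_one_le)
  then have 2: "\<bar>r\<bar> \<le> \<theta> * K" using assms by (simp add: mult_ac)
  show ?thesis using 1 2 by (simp add: algebra_simps)
qed

lemma bound_aa:
  fixes r K \<theta> w D qq u E W R t :: real
  assumes r: "\<bar>r\<bar> \<le> K * \<theta>^2" and w: "\<bar>w\<bar> \<le> D" and qq: "\<bar>qq\<bar> \<le> 1" and u: "\<bar>u\<bar> \<le> 1" and E: "\<bar>E\<bar> \<le> 1"
    and W: "\<bar>W\<bar> \<le> D * D" and R: "\<bar>R\<bar> \<le> (D * K) * \<theta>^2"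
    and th: "0 < \<theta>" "\<theta> \<le> 1" and t: "t \<ge> 0" and K: "K \<ge> 0" and D: "D \<ge> 0"
  shows "\<bar>r * u + \<theta> * (\<theta> * t / 2 * w + r) * qq * E - \<theta> / 2 * (\<theta> * t / 2 * W + R) * E\<bar>
     \<le> \<theta>^2 * (2 * K + t * D + t * (D * D) + D * K)"
proof -
  have 1: "\<bar>r * u\<bar> \<le> (K * \<theta>^2) * 1" by (rule bnd_prod[OF r u])
  have l1: "\<bar>\<theta> * t / 2 * w + r\<bar> \<le> \<theta> * (t * D + K)" by (rule lin_small) (use assms in auto)
  have l2: "\<bar>\<theta> * t / 2 * W + R\<bar> \<le> \<theta> * (t * (D * D) + D * K)" by (rule lin_small) (use assms in auto)
  have 2: "\<bar>\<theta> * (\<theta> * t / 2 * w + r) * qq * E\<bar> \<le> \<theta> * (\<theta> * (t * D + K)) * 1 * 1"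
    by (intro bnd_prod l1 qq E) (use th in auto)
  have 3: "\<bar>\<theta> / 2 * (\<theta> * t / 2 * W + R) * E\<bar> \<le> \<theta> / 2 * (\<theta> * (t * (D * D) + D * K)) * 1"
    by (intro bnd_prod l2 E) (use th in auto)
  have "\<theta> / 2 * (\<theta> * (t * (D * D) + D * K)) * 1 \<le> \<theta> * (\<theta> * (t * (D * D) + D * K))"
    using th t D K by (simp add: mult_ac)
  then have "\<bar>r * u + \<theta> * (\<theta> * t / 2 * w + r) * qq * E - \<theta> / 2 * (\<theta> * t / 2 * W + R) * E\<bar>
     \<le> K * \<theta>^2 + \<theta> * (\<theta> * (t * D + K)) + \<theta> * (\<theta> * (t * (D * D) + D * K))"
    using 1 2 3 by linarith
  also have "\<dots> = \<theta>^2 * (2 * K + t * D + t * (D * D) + D * K)" by (simp add: power2_eq_square algebra_simps)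
  finally show ?thesis .
qed

lemma bound_ab:
  fixes A B c p1 p2 E \<theta> :: real
  assumes A: "\<bar>A\<bar> \<le> \<theta> * c" and B: "\<bar>B\<bar> \<le> \<theta> * c" and p1: "\<bar>p1\<bar> \<le> 1" and p2: "\<bar>p2\<bar> \<le> 1" and E: "\<bar>E\<bar> \<le> 1"
    and th: "0 < \<theta>"
  shows "\<bar>\<theta> * E * (A * p1 + B * p2)\<bar> \<le> \<theta>^2 * (2 * c)"
proof -
  have "\<bar>A * p1\<bar> \<le> (\<theta> * c) * 1" by (rule bnd_prod[OF A p1])
  moreover have "\<bar>B * p2\<bar> \<le> (\<theta> * c) * 1" by (rule bnd_prod[OF B p2])
  ultimately have "\<bar>A * p1 + B * p2\<bar> \<le> 2 * (\<theta> * c)" by linarith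
  then have "\<bar>\<theta> * E * (A * p1 + B * p2)\<bar> \<le> (\<theta> * 1) * (2 * (\<theta> * c))"
    by (intro bnd_prod) (use th E in \<open>auto simp: abs_mult mult_left_le_one_le\<close>)
  then show ?thesis by (simp add: power2_eq_square mult_ac)
qed

lemma E_bounds: "t \<ge> 0 \<Longrightarrow> \<bar>1 - exp (-t)\<bar> \<le> 1 \<and> \<bar>1 - (1 + t) * exp (-t)\<bar> \<le> (1::real)"
proof -
  assume t: "t \<ge> 0"
  have e1: "exp (-t) \<le> 1" using t by simp
  have e0: "0 < exp (-t)" by simp
  have "(1 + t) * exp (-t) \<le> exp t * exp (-t)" using exp_ge_add_one_self[of t] e0 by (intro mult_right_mono) auto
  then have "(1 + t) * exp (-t) \<le> 1" by (simp add: exp_minus)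
  moreover have "0 \<le> (1 + t) * exp (-t)" using t e0 by simp
  ultimately show ?thesis using e1 e0 by auto
qed

lemma wf_bound:
  fixes x :: "real^'d::finite"
  assumes x: "x \<in> prob_simplex" and q: "\<And>j i. \<bar>q j i\<bar> \<le> 1"
  shows "\<bar>wf x q i\<bar> \<le> real CARD('d)"
proof -
  have "\<bar>wf x q i\<bar> \<le> real CARD('d) * 1" unfolding wf_def
    by (rule sum_abs_bound, rule qmul) (use simplex_bd[OF x] q in auto)
  then show ?thesis by simp
qed

lemma F2: "(\<Sum>j\<in>UNIV. x$j * P$j$a) = wf x (\<lambda>j i. P$j$i - (if j = i then 1 else 0)) a + (x::real^'d::finite)$a"
proof -
  have "wf x (\<lambda>j i. P$j$i - (if j = i then 1 else 0)) a = (\<Sum>j\<in>UNIV. x$j * P$j$a) - (\<Sum>j\<in>UNIV. x$j * (if j = a then 1 else 0))"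
    unfolding wf_def by (simp add: right_diff_distrib sum_subtractf)
  then show ?thesis by (simp add: sdr)
qed

lemma aa_ident:
  fixes m x :: "real^'d::finite" and P :: "real^'d^'d" and \<theta> t :: real
  assumes qd: "q = (\<lambda>j i. P$j$i - (if j = i then 1 else 0))"
  defines "\<rho> \<equiv> \<lambda>i. m$i - x$i - \<theta> * t / 2 * wf x q i"
  shows "(x$a)^2 * (1 - \<theta> * t) * exp (-t) + \<theta> * t * exp (-t) * x$a * (\<Sum>j\<in>UNIV. x$j * P$j$a)
     + m$a * (1 - exp (-t)) + \<theta> * (m$a * (P$a$a - 1) - (1/2) * (m v* (P - mat 1))$a) * (1 - (1 + t) * exp (-t))
     - S0f x a a t - \<theta> * S1f x q a a t
    = \<rho> a * (1 - exp (-t)) + \<theta> * (\<theta> * t / 2 * wf x q a + \<rho> a) * q a a * (1 - (1 + t) * exp (-t))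
     - \<theta> / 2 * (\<theta> * t / 2 * (\<Sum>j\<in>UNIV. wf x q j * q j a) + (\<Sum>j\<in>UNIV. \<rho> j * q j a)) * (1 - (1 + t) * exp (-t))"
proof -
  have mj: "m$j = x$j + \<theta> * t / 2 * wf x q j + \<rho> j" for j by (simp add: \<rho>_def)
  have F1: "(m v* (P - mat 1))$a = wf x q a + \<theta> * t / 2 * (\<Sum>j\<in>UNIV. wf x q j * q j a) + (\<Sum>j\<in>UNIV. \<rho> j * q j a)"
  proof -
    have "(m v* (P - mat 1))$a = (\<Sum>j\<in>UNIV. m$j * q j a)"
      by (simp add: vector_matrix_mult_def mat_def qd)
    also have "\<dots> = (\<Sum>j\<in>UNIV. x$j * q j a + \<theta> * t / 2 * (wf x q j * q j a) + \<rho> j * q j a)"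
      by (rule sum.cong) (auto simp: mj algebra_simps)
    also have "\<dots> = wf x q a + \<theta> * t / 2 * (\<Sum>j\<in>UNIV. wf x q j * q j a) + (\<Sum>j\<in>UNIV. \<rho> j * q j a)"
      by (simp add: sum.distrib sum_distrib_left wf_def)
    finally show ?thesis .
  qed
  have F2': "(\<Sum>j\<in>UNIV. x$j * P$j$a) = wf x q a + x$a" unfolding qd by (rule F2)
  have qaa: "P$a$a - 1 = q a a" by (simp add: qd)
  show ?thesis unfolding F1 F2' qaa mj[of a]
    by (simp add: S0f_def S1f_def power2_eq_square algebra_simps add_divide_distrib diff_divide_distrib)
qed

lemma ab_ident:
  fixes m x :: "real^'d::finite" and P :: "real^'d^'d" and \<theta> t :: real
  assumes qd: "q = (\<lambda>j i. P$j$i - (if j = i then 1 else 0))" and ab: "a \<noteq> b"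
  defines "\<rho> \<equiv> \<lambda>i. m$i - x$i - \<theta> * t / 2 * wf x q i"
  shows "2 * x$a * x$b * (1 - \<theta> * t) * exp (-t)
          + \<theta> * t * exp (-t) * (\<Sum>j\<in>UNIV. x$a * x$j * P$j$b + x$b * x$j * P$j$a)
          + \<theta> * (m$a * P$a$b + m$b * P$b$a) * (1 - (1 + t) * exp (-t))
       - 2 * (S0f x a b t + \<theta> * S1f x q a b t)
    = \<theta> * (1 - (1 + t) * exp (-t)) * ((\<theta> * t / 2 * wf x q a + \<rho> a) * P$a$b + (\<theta> * t / 2 * wf x q b + \<rho> b) * P$b$a)"
proof -
  have mj: "m$j = x$j + (\<theta> * t / 2 * wf x q j + \<rho> j)" for j by (simp add: \<rho>_def)
  have "(\<Sum>j\<in>UNIV. x$a * x$j * P$j$b + x$b * x$j * P$j$a) = x$a * (\<Sum>j\<in>UNIV. x$j * P$j$b) + x$b * (\<Sum>j\<in>UNIV. x$j * P$j$a)"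
    by (simp add: sum.distrib sum_distrib_left mult_ac)
  also have "\<dots> = x$a * (wf x q b + x$b) + x$b * (wf x q a + x$a)" unfolding qd by (simp add: F2)
  finally have F: "(\<Sum>j\<in>UNIV. x$a * x$j * P$j$b + x$b * x$j * P$j$a) = x$a * (wf x q b + x$b) + x$b * (wf x q a + x$a)" .
  have qab: "q a b = P$a$b" "q b a = P$b$a" using ab by (auto simp: qd)
  show ?thesis unfolding F mj[of a] mj[of b]
    using ab by (simp add: S0f_def S1f_def qab algebra_simps add_divide_distrib diff_divide_distrib)
qed
theorem mainTheorem8:
  fixes P :: "real^'d^'d" and x :: "real^'d" and t :: real
    and M :: "real \<Rightarrow> 'w measure" and X :: "real \<Rightarrow> real \<Rightarrow> 'w \<Rightarrow> real^'d"
  assumes d2: "CARD('d) \<ge> 2"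
    and P: "stochastic P"
    and x: "x \<in> prob_simplex"
    and t: "t \<ge> 0"
    and WF: "\<And>\<theta>. \<theta> > 0 \<Longrightarrow> WF_process \<theta> P x (M \<theta>) (X \<theta>)"
  shows
   "(\<forall>a. (\<lambda>\<theta>. (\<integral>\<omega>. mult (\<lambda>j. 2 * unitv a j) (X \<theta> t \<omega>) \<partial>M \<theta>)
        - ( (x$a)^2 * (1 - \<theta> * t) * exp (-t)
          + \<theta> * t * exp (-t) * x$a * (\<Sum>j\<in>UNIV. x$j * P$j$a)
          + (x v* mexp (t *\<^sub>R gammaM \<theta> P))$a * (1 - exp (-t))
          + \<theta> * ( (x v* mexp (t *\<^sub>R gammaM \<theta> P))$a * (P$a$a - 1)
                  - (1/2) * ((x v* mexp (t *\<^sub>R gammaM \<theta> P)) v* (P - mat 1))$a )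
              * (1 - (1 + t) * exp (-t))))
      \<in> o[at_right 0](\<lambda>\<theta>. \<theta>))
   \<and>
   (\<forall>a b. a \<noteq> b \<longrightarrow> (\<lambda>\<theta>. (\<integral>\<omega>. mult (\<lambda>j. unitv a j + unitv b j) (X \<theta> t \<omega>) \<partial>M \<theta>)
        - ( 2 * x$a * x$b * (1 - \<theta> * t) * exp (-t)
          + \<theta> * t * exp (-t) * (\<Sum>j\<in>UNIV. x$a * x$j * P$j$b + x$b * x$j * P$j$a)
          + \<theta> * ( (x v* mexp (t *\<^sub>R gammaM \<theta> P))$a * P$a$b
                  + (x v* mexp (t *\<^sub>R gammaM \<theta> P))$b * P$b$a )
              * (1 - (1 + t) * exp (-t))))
      \<in> o[at_right 0](\<lambda>\<theta>. \<theta>))"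
proof -
  define q where "q = (\<lambda>j i. P$j$i - (if j = i then 1 else (0::real)))"
  define D where "D = real CARD('d)"
  define Kr where "Kr = D * (t * D)^2 * exp (t * D)"
  define K1 where "K1 = (D * D * t * t + D * (D * (t + 1) * t)) * t"
  have D0: "D \<ge> 0" by (simp add: D_def)
  have Kr0: "Kr \<ge> 0" using D0 by (simp add: Kr_def)
  have K10: "K1 \<ge> 0" using D0 t by (simp add: K1_def)
  have qb: "\<bar>q j i\<bar> \<le> 1" for j i unfolding q_def by (rule q_bound[OF P])
  have Eb: "\<bar>1 - exp (-t)\<bar> \<le> 1" "\<bar>1 - (1 + t) * exp (-t)\<bar> \<le> 1" using E_bounds[OF t] by auto
  have key: "\<bar>(\<integral>\<omega>. X \<theta> t \<omega> $ a * X \<theta> t \<omega> $ b \<partial>M \<theta>) - S0f x a b t - \<theta> * S1f x q a b t\<bar> \<le> \<theta>^2 * K1"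
    if th: "0 < \<theta>" for \<theta> a b
    using per_theta[OF th WF[OF th] P t, of a b] unfolding q_def K1_def D_def .
  have rho: "\<bar>(x v* mexp (t *\<^sub>R gammaM \<theta> P))$i - x$i - \<theta> * t / 2 * wf x q i\<bar> \<le> Kr * \<theta>^2"
    if th: "0 < \<theta>" "\<theta> \<le> 1" for \<theta> i
    using rho_bound[OF P t x th, of i] unfolding q_def Kr_def D_def by (simp add: mult_ac)
  have wb: "\<bar>wf x q i\<bar> \<le> D" for i unfolding D_def by (rule wf_bound[OF x qb])
  have Wb: "\<bar>\<Sum>j\<in>UNIV. wf x q j * q j a\<bar> \<le> D * D" for a
  proof -
    have "\<bar>\<Sum>j\<in>UNIV. wf x q j * q j a\<bar> \<le> real CARD('d) * (D * 1)"
      by (rule sum_abs_bound, rule bnd_prod[OF wb qb])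
    then show ?thesis by (simp add: D_def)
  qed
  show ?thesis
  proof (intro conjI allI impI)
    fix a
    show "(\<lambda>\<theta>. (\<integral>\<omega>. mult (\<lambda>j. 2 * unitv a j) (X \<theta> t \<omega>) \<partial>M \<theta>)
        - ( (x$a)^2 * (1 - \<theta> * t) * exp (-t)
          + \<theta> * t * exp (-t) * x$a * (\<Sum>j\<in>UNIV. x$j * P$j$a)
          + (x v* mexp (t *\<^sub>R gammaM \<theta> P))$a * (1 - exp (-t))
          + \<theta> * ( (x v* mexp (t *\<^sub>R gammaM \<theta> P))$a * (P$a$a - 1)
                  - (1/2) * ((x v* mexp (t *\<^sub>R gammaM \<theta> P)) v* (P - mat 1))$a )
              * (1 - (1 + t) * exp (-t))))
      \<in> o[at_right 0](\<lambda>\<theta>. \<theta>)"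
    proof (rule small_from_bound[where C = "K1 + (2 * Kr + t * D + t * (D * D) + D * Kr)"])
      show "K1 + (2 * Kr + t * D + t * (D * D) + D * Kr) \<ge> 0" using K10 Kr0 D0 t by simp
      fix \<theta> :: real assume th: "0 < \<theta>" "\<theta> \<le> 1"
      define m where "m = x v* mexp (t *\<^sub>R gammaM \<theta> P)"
      define \<rho> where "\<rho> = (\<lambda>i. m$i - x$i - \<theta> * t / 2 * wf x q i)"
      have rb: "\<bar>\<rho> i\<bar> \<le> Kr * \<theta>^2" for i unfolding \<rho>_def m_def by (rule rho[OF th])
      have Rb: "\<bar>\<Sum>j\<in>UNIV. \<rho> j * q j a\<bar> \<le> (D * Kr) * \<theta>^2"
      proof -
        have "\<bar>\<Sum>j\<in>UNIV. \<rho> j * q j a\<bar> \<le> real CARD('d) * (Kr * \<theta>^2 * 1)"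
          by (rule sum_abs_bound, rule bnd_prod[OF rb qb])
        then show ?thesis by (simp add: D_def mult_ac)
      qed
      have int: "(\<integral>\<omega>. mult (\<lambda>j. 2 * unitv a j) (X \<theta> t \<omega>) \<partial>M \<theta>) = (\<integral>\<omega>. X \<theta> t \<omega> $ a * X \<theta> t \<omega> $ a \<partial>M \<theta>)"
        by (simp add: mult_aa)
      have I: "(x$a)^2 * (1 - \<theta> * t) * exp (-t) + \<theta> * t * exp (-t) * x$a * (\<Sum>j\<in>UNIV. x$j * P$j$a)
         + m$a * (1 - exp (-t)) + \<theta> * (m$a * (P$a$a - 1) - (1/2) * (m v* (P - mat 1))$a) * (1 - (1 + t) * exp (-t))
         - S0f x a a t - \<theta> * S1f x q a a t
        = \<rho> a * (1 - exp (-t)) + \<theta> * (\<theta> * t / 2 * wf x q a + \<rho> a) * q a a * (1 - (1 + t) * exp (-t))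
         - \<theta> / 2 * (\<theta> * t / 2 * (\<Sum>j\<in>UNIV. wf x q j * q j a) + (\<Sum>j\<in>UNIV. \<rho> j * q j a)) * (1 - (1 + t) * exp (-t))"
        unfolding \<rho>_def by (rule aa_ident[OF q_def])
      have B: "\<bar>\<rho> a * (1 - exp (-t)) + \<theta> * (\<theta> * t / 2 * wf x q a + \<rho> a) * q a a * (1 - (1 + t) * exp (-t))
         - \<theta> / 2 * (\<theta> * t / 2 * (\<Sum>j\<in>UNIV. wf x q j * q j a) + (\<Sum>j\<in>UNIV. \<rho> j * q j a)) * (1 - (1 + t) * exp (-t))\<bar>
         \<le> \<theta>^2 * (2 * Kr + t * D + t * (D * D) + D * Kr)"
        by (rule bound_aa[OF rb wb qb Eb(1) Eb(2) Wb Rb th t Kr0 D0])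
      have k: "\<bar>(\<integral>\<omega>. X \<theta> t \<omega> $ a * X \<theta> t \<omega> $ a \<partial>M \<theta>) - S0f x a a t - \<theta> * S1f x q a a t\<bar> \<le> \<theta>^2 * K1"
        by (rule key[OF th(1)])
      show "\<bar>(\<integral>\<omega>. mult (\<lambda>j. 2 * unitv a j) (X \<theta> t \<omega>) \<partial>M \<theta>)
        - ( (x$a)^2 * (1 - \<theta> * t) * exp (-t)
          + \<theta> * t * exp (-t) * x$a * (\<Sum>j\<in>UNIV. x$j * P$j$a)
          + (x v* mexp (t *\<^sub>R gammaM \<theta> P))$a * (1 - exp (-t))
          + \<theta> * ( (x v* mexp (t *\<^sub>R gammaM \<theta> P))$a * (P$a$a - 1)
                  - (1/2) * ((x v* mexp (t *\<^sub>R gammaM \<theta> P)) v* (P - mat 1))$a )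
              * (1 - (1 + t) * exp (-t)))\<bar>
        \<le> (K1 + (2 * Kr + t * D + t * (D * D) + D * Kr)) * \<theta>^2"
        unfolding int m_def[symmetric] using I B k by (simp add: algebra_simps)
    qed
  next
    fix a b :: 'd assume ab: "a \<noteq> b"
    show "(\<lambda>\<theta>. (\<integral>\<omega>. mult (\<lambda>j. unitv a j + unitv b j) (X \<theta> t \<omega>) \<partial>M \<theta>)
        - ( 2 * x$a * x$b * (1 - \<theta> * t) * exp (-t)
          + \<theta> * t * exp (-t) * (\<Sum>j\<in>UNIV. x$a * x$j * P$j$b + x$b * x$j * P$j$a)
          + \<theta> * ( (x v* mexp (t *\<^sub>R gammaM \<theta> P))$a * P$a$b
                  + (x v* mexp (t *\<^sub>R gammaM \<theta> P))$b * P$b$a )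
              * (1 - (1 + t) * exp (-t))))
      \<in> o[at_right 0](\<lambda>\<theta>. \<theta>)"
    proof (rule small_from_bound[where C = "2 * K1 + 2 * (t * D + Kr)"])
      show "2 * K1 + 2 * (t * D + Kr) \<ge> 0" using K10 Kr0 D0 t by simp
      fix \<theta> :: real assume th: "0 < \<theta>" "\<theta> \<le> 1"
      define m where "m = x v* mexp (t *\<^sub>R gammaM \<theta> P)"
      define \<rho> where "\<rho> = (\<lambda>i. m$i - x$i - \<theta> * t / 2 * wf x q i)"
      have rb: "\<bar>\<rho> i\<bar> \<le> Kr * \<theta>^2" for i unfolding \<rho>_def m_def by (rule rho[OF th])
      have lb: "\<bar>\<theta> * t / 2 * wf x q i + \<rho> i\<bar> \<le> \<theta> * (t * D + Kr)" for i
        by (rule lin_small[OF wb rb th t Kr0 D0])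
      have pab: "\<bar>P$a$b\<bar> \<le> 1" "\<bar>P$b$a\<bar> \<le> 1" using q_bound[OF P, of a b] q_bound[OF P, of b a] ab by auto
      have int: "(\<integral>\<omega>. mult (\<lambda>j. unitv a j + unitv b j) (X \<theta> t \<omega>) \<partial>M \<theta>) = 2 * (\<integral>\<omega>. X \<theta> t \<omega> $ a * X \<theta> t \<omega> $ b \<partial>M \<theta>)"
        by (simp add: mult_ab[OF ab])
      have I: "2 * x$a * x$b * (1 - \<theta> * t) * exp (-t)
          + \<theta> * t * exp (-t) * (\<Sum>j\<in>UNIV. x$a * x$j * P$j$b + x$b * x$j * P$j$a)
          + \<theta> * (m$a * P$a$b + m$b * P$b$a) * (1 - (1 + t) * exp (-t))
       - 2 * (S0f x a b t + \<theta> * S1f x q a b t)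
    = \<theta> * (1 - (1 + t) * exp (-t)) * ((\<theta> * t / 2 * wf x q a + \<rho> a) * P$a$b + (\<theta> * t / 2 * wf x q b + \<rho> b) * P$b$a)"
        unfolding \<rho>_def by (rule ab_ident[OF q_def ab])
      have B: "\<bar>\<theta> * (1 - (1 + t) * exp (-t)) * ((\<theta> * t / 2 * wf x q a + \<rho> a) * P$a$b + (\<theta> * t / 2 * wf x q b + \<rho> b) * P$b$a)\<bar>
          \<le> \<theta>^2 * (2 * (t * D + Kr))"
        by (rule bound_ab[OF lb lb pab Eb(2) th(1)])
      have k: "\<bar>(\<integral>\<omega>. X \<theta> t \<omega> $ a * X \<theta> t \<omega> $ b \<partial>M \<theta>) - S0f x a b t - \<theta> * S1f x q a b t\<bar> \<le> \<theta>^2 * K1"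
        by (rule key[OF th(1)])
      show "\<bar>(\<integral>\<omega>. mult (\<lambda>j. unitv a j + unitv b j) (X \<theta> t \<omega>) \<partial>M \<theta>)
        - ( 2 * x$a * x$b * (1 - \<theta> * t) * exp (-t)
          + \<theta> * t * exp (-t) * (\<Sum>j\<in>UNIV. x$a * x$j * P$j$b + x$b * x$j * P$j$a)
          + \<theta> * ( (x v* mexp (t *\<^sub>R gammaM \<theta> P))$a * P$a$b
                  + (x v* mexp (t *\<^sub>R gammaM \<theta> P))$b * P$b$a )
              * (1 - (1 + t) * exp (-t)))\<bar>
        \<le> (2 * K1 + 2 * (t * D + Kr)) * \<theta>^2"
        unfolding int m_def[symmetric] using I B k by (simp add: algebra_simps)
    qed
  qed
qed

end
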